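(* Let $A$ be a finite abelian group with $|A|=n$, and let $T$ be an $A$-cordial tree with $nk$ vertices for some $k\in\mathbb{N}$. If $T^*$ is a tree containing $T$ as an induced subgraph and $|V(T^* )|\le nk+\lfloor n/2\rfloor+1$, then $T^*$ is $A$-cordial.
   Context: $\mathbb{N}=\mathbb{Z}_{\ge0}$. Graphs are finite, simple and undirected. For an abelian group $A$ and a graph $G=(V,E)$, a vertex labeling $\ell:V\to A$ induces an edge labeling $\ell(\{v_1,v_2\})=\ell(v_1)+\ell(v_2)$. Let $f_V(a)=|\{v\in V:\ell(v)=a\}|$ and $f_E(a)=|\{e\in E:\ell(e)=a\}|$. The labeling is $A$-cordial if $|f_V(a_1)-f_V(a_2)|\le 1$ and $|f_E(a_1)-f_E(a_2)|\le 1$ for all $a_1,a_2\in A$; $G$ is $A$-cordial if it admits an $A$-cordial labeling. *)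

theory Defs
  imports Main
begin

definition simple_graph :: "'v set \<Rightarrow> 'v set set \<Rightarrow> bool" where
  "simple_graph V E \<longleftrightarrow> finite V \<and> (\<forall>e\<in>E. \<exists>u v. e = {u, v} \<and> u \<noteq> v \<and> u \<in> V \<and> v \<in> V)"

definition adj :: "'v set set \<Rightarrow> 'v \<Rightarrow> 'v \<Rightarrow> bool" where
  "adj E u v \<longleftrightarrow> {u, v} \<in> E"

definition is_walk :: "'v set set \<Rightarrow> 'v list \<Rightarrow> bool" where
  "is_walk E xs \<longleftrightarrow> xs \<noteq> [] \<and> (\<forall>i. Suc i < length xs \<longrightarrow> adj E (xs ! i) (xs ! Suc i))"

definition connected_graph :: "'v set \<Rightarrow> 'v set set \<Rightarrow> bool" where
  "connected_graph V E \<longleftrightarrow>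
     (\<forall>u\<in>V. \<forall>v\<in>V. \<exists>xs. is_walk E xs \<and> set xs \<subseteq> V \<and> hd xs = u \<and> last xs = v)"

definition has_cycle :: "'v set set \<Rightarrow> bool" where
  "has_cycle E \<longleftrightarrow> (\<exists>xs. length xs \<ge> 3 \<and> distinct xs \<and> is_walk E xs \<and> adj E (last xs) (hd xs))"

definition is_tree :: "'v set \<Rightarrow> 'v set set \<Rightarrow> bool" where
  "is_tree V E \<longleftrightarrow> simple_graph V E \<and> V \<noteq> {} \<and> connected_graph V E \<and> \<not> has_cycle E"

definition induced_subgraph :: "'v set \<Rightarrow> 'v set set \<Rightarrow> 'v set \<Rightarrow> 'v set set \<Rightarrow> bool" where
  "induced_subgraph V E V' E' \<longleftrightarrow> V \<subseteq> V' \<and> E = {e \<in> E'. e \<subseteq> V}"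

definition vcount :: "'v set \<Rightarrow> ('v \<Rightarrow> 'a) \<Rightarrow> 'a \<Rightarrow> nat" where
  "vcount V l a = card {v \<in> V. l v = a}"

definition ecount :: "'v set set \<Rightarrow> ('v \<Rightarrow> 'a::plus) \<Rightarrow> 'a \<Rightarrow> nat" where
  "ecount E l a = card {e \<in> E. \<exists>u v. e = {u, v} \<and> u \<noteq> v \<and> l u + l v = a}"

definition cordial_labeling :: "'v set \<Rightarrow> 'v set set \<Rightarrow> ('v \<Rightarrow> 'a::{ab_group_add,finite}) \<Rightarrow> bool" where
  "cordial_labeling V E l \<longleftrightarrow>
     (\<forall>a1 a2. \<bar>int (vcount V l a1) - int (vcount V l a2)\<bar> \<le> 1) \<and>
     (\<forall>a1 a2. \<bar>int (ecount E l a1) - int (ecount E l a2)\<bar> \<le> 1)"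

text \<open>G is A-cordial, where the abelian group A is the type 'a.\<close>
definition cordial :: "'a::{ab_group_add,finite} itself \<Rightarrow> 'v set \<Rightarrow> 'v set set \<Rightarrow> bool" where
  "cordial _ V E \<longleftrightarrow> (\<exists>l :: 'v \<Rightarrow> 'a. cordial_labeling V E l)"

end

theory Submission
  imports Defs
begin


lemma walk_single[simp]: "is_walk E [x]"
  by (simp add: is_walk_def)

lemma walk_cons2: "is_walk E (x # y # ys) \<longleftrightarrow> adj E x y \<and> is_walk E (y # ys)"
proof
  assume h: "is_walk E (x # y # ys)"
  have "adj E x y" using h[unfolded is_walk_def, THEN conjunct2, rule_format, of 0] by simp
  moreover have "is_walk E (y # ys)" unfolding is_walk_def
  proof (intro conjI allI impI)
    fix i assume "Suc i < length (y # ys)"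
    then show "adj E ((y # ys) ! i) ((y # ys) ! Suc i)"
      using h[unfolded is_walk_def, THEN conjunct2, rule_format, of "Suc i"] by simp
  qed simp
  ultimately show "adj E x y \<and> is_walk E (y # ys)" by simp
next
  assume h: "adj E x y \<and> is_walk E (y # ys)"
  show "is_walk E (x # y # ys)" unfolding is_walk_def
  proof (intro conjI allI impI)
    fix i assume "Suc i < length (x # y # ys)"
    then show "adj E ((x # y # ys) ! i) ((x # y # ys) ! Suc i)"
      using h unfolding is_walk_def by (cases i) auto
  qed simp
qed

lemma walk_cons: "ys \<noteq> [] \<Longrightarrow> is_walk E (x # ys) \<longleftrightarrow> adj E x (hd ys) \<and> is_walk E ys"
  by (cases ys) (auto simp: walk_cons2)

lemma walk_suffix: "is_walk E (ys @ zs) \<Longrightarrow> zs \<noteq> [] \<Longrightarrow> is_walk E zs"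
proof (induction ys)
  case (Cons a ys)
  then show ?case by (cases "ys @ zs") (auto simp: walk_cons2)
qed simp

lemma walk_snoc: "is_walk E xs \<Longrightarrow> adj E (last xs) w \<Longrightarrow> is_walk E (xs @ [w])"
proof (induction xs)
  case Nil then show ?case by (simp add: is_walk_def)
next
  case (Cons a xs)
  show ?case
  proof (cases xs)
    case Nil then show ?thesis using Cons by (simp add: walk_cons2)
  next
    case (Cons b ys)
    then show ?thesis using Cons.prems Cons.IH by (auto simp: walk_cons2)
  qed
qed

lemma walk_mono: "is_walk E xs \<Longrightarrow> E \<subseteq> F \<Longrightarrow> is_walk F xs"
  unfolding is_walk_def adj_def by blast

lemma walk_path:
  "is_walk E xs \<Longrightarrow> \<exists>ys. is_walk E ys \<and> distinct ys \<and> set ys \<subseteq> set xs \<and> hd ys = hd xs \<and> last ys = last xs"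
proof (induction xs)
  case Nil then show ?case by (simp add: is_walk_def)
next
  case (Cons x xs)
  show ?case
  proof (cases xs)
    case Nil then show ?thesis by (intro exI[of _ "[x]"]) simp
  next
    case (Cons b zs)
    then have w: "is_walk E xs" "adj E x (hd xs)" using Cons.prems by (auto simp: walk_cons2)
    then obtain ys where ys: "is_walk E ys" "distinct ys" "set ys \<subseteq> set xs" "hd ys = hd xs" "last ys = last xs"
      using Cons.IH by blast
    have yne: "ys \<noteq> []" using ys(1) by (simp add: is_walk_def)
    show ?thesis
    proof (cases "x \<in> set ys")
      case True
      then obtain y1 y2 where sp: "ys = y1 @ x # y2" by (meson split_list)
      have "is_walk E (x # y2)" using walk_suffix[of E y1 "x # y2"] ys(1) sp by simp
      moreover have "distinct (x # y2)" using ys(2) sp by simp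
      moreover have "set (x # y2) \<subseteq> set (x # xs)" using ys(3) sp by auto
      moreover have "last (x # y2) = last (x # xs)" using ys(5) sp Cons by (cases y2) auto
      ultimately show ?thesis by (intro exI[of _ "x # y2"]) simp
    next
      case False
      have "is_walk E (x # ys)" using walk_cons[OF yne] w ys by simp
      moreover have "distinct (x # ys)" using False ys by simp
      moreover have "set (x # ys) \<subseteq> set (x # xs)" using ys(3) by auto
      moreover have "last (x # ys) = last (x # xs)" using ys(5) yne Cons by simp
      ultimately show ?thesis by (intro exI[of _ "x # ys"]) simp
    qed
  qed
qed

lemma adj_sym: "adj E u v \<longleftrightarrow> adj E v u"
  by (simp add: adj_def insert_commute)

lemma grow_step:
  assumes sg: "simple_graph V' E'" and cV: "connected_graph V' E'" and nc: "\<not> has_cycle E'"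
    and SV: "S \<subseteq> V'" and Sne: "S \<noteq> {}" and cS: "connected_graph S E'" and neq: "S \<noteq> V'"
  shows "\<exists>w p. w \<in> V' \<and> w \<notin> S \<and> p \<in> S \<and> {w,p} \<in> E' \<and> (\<forall>q\<in>S. {w,q} \<in> E' \<longrightarrow> q = p)
           \<and> connected_graph (insert w S) E'"
proof -
  obtain s where s: "s \<in> S" using Sne by blast
  obtain t where t: "t \<in> V'" "t \<notin> S" using SV neq by blast
  obtain xs where xs: "is_walk E' xs" "set xs \<subseteq> V'" "hd xs = s" "last xs = t"
    using cV s SV t unfolding connected_graph_def by blast
  have xne: "xs \<noteq> []" using xs(1) by (simp add: is_walk_def)
  have ex: "\<exists>i. i < length xs \<and> xs ! i \<notin> S"
    using xs(4) t xne by (intro exI[of _ "length xs - 1"]) (simp add: last_conv_nth)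
  define i where "i = (LEAST i. i < length xs \<and> xs ! i \<notin> S)"
  have i: "i < length xs" "xs ! i \<notin> S" using LeastI_ex[OF ex] unfolding i_def by auto
  have i0: "i \<noteq> 0"
  proof
    assume "i = 0" then show False using i xs(3) s xne by (simp add: hd_conv_nth)
  qed
  have prev: "xs ! (i - 1) \<in> S"
    using not_less_Least[of "i - 1" "\<lambda>i. i < length xs \<and> xs ! i \<notin> S"] i i0 unfolding i_def[symmetric]
    by auto
  define w where "w = xs ! i"
  define p where "p = xs ! (i - 1)"
  have wV: "w \<in> V'" using xs(2) i unfolding w_def by auto
  have adjpw: "adj E' p w" using xs(1) i i0 unfolding is_walk_def p_def w_def
    by (metis Suc_pred' not_gr_zero)
  then have wp: "{w,p} \<in> E'" by (simp add: adj_def insert_commute)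
  have uniq: "\<forall>q\<in>S. {w,q} \<in> E' \<longrightarrow> q = p"
  proof (intro ballI impI, rule ccontr)
    fix q assume q: "q \<in> S" "{w,q} \<in> E'" "q \<noteq> p"
    obtain zs where zs: "is_walk E' zs" "set zs \<subseteq> S" "hd zs = p" "last zs = q"
      using cS q(1) prev unfolding connected_graph_def p_def by blast
    obtain ys where ys: "is_walk E' ys" "distinct ys" "set ys \<subseteq> S" "hd ys = p" "last ys = q"
      using walk_path[OF zs(1)] zs by blast
    have yne: "ys \<noteq> []" using ys(1) by (simp add: is_walk_def)
    have "length ys \<noteq> 1" using ys q(3) yne by (cases ys) auto
    moreover have "length ys \<noteq> 0" using yne by simp
    ultimately have l2: "length ys \<ge> 2" by linarith
    have "is_walk E' (w # ys)" using walk_cons[OF yne] ys(1,4) adjpw adj_sym by metis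
    moreover have "distinct (w # ys)" using ys(2,3) i(2) unfolding w_def by auto
    moreover have "adj E' (last (w # ys)) (hd (w # ys))" using ys(5) yne q(2) by (simp add: adj_def insert_commute)
    moreover have "length (w # ys) \<ge> 3" using l2 by simp
    ultimately have "has_cycle E'" unfolding has_cycle_def by blast
    then show False using nc by simp
  qed
  have conn: "connected_graph (insert w S) E'"
    unfolding connected_graph_def
  proof (intro ballI)
    fix u v assume u: "u \<in> insert w S" and v: "v \<in> insert w S"
    show "\<exists>xs. is_walk E' xs \<and> set xs \<subseteq> insert w S \<and> hd xs = u \<and> last xs = v"
    proof (cases "u = w")
      case uw: True
      show ?thesis
      proof (cases "v = w")
        case True then show ?thesis using uw by (intro exI[of _ "[w]"]) simp
      next
        case False
        then have "v \<in> S" using v by simp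
        then obtain zs where zs: "is_walk E' zs" "set zs \<subseteq> S" "hd zs = p" "last zs = v"
          using cS prev unfolding connected_graph_def p_def by blast
        have zne: "zs \<noteq> []" using zs(1) by (simp add: is_walk_def)
        have "is_walk E' (w # zs)" using walk_cons[OF zne] zs adjpw adj_sym by metis
        then show ?thesis using zs zne uw by (intro exI[of _ "w # zs"]) auto
      qed
    next
      case uS: False
      then have uS: "u \<in> S" using u by simp
      show ?thesis
      proof (cases "v = w")
        case True
        obtain zs where zs: "is_walk E' zs" "set zs \<subseteq> S" "hd zs = u" "last zs = p"
          using cS prev uS unfolding connected_graph_def p_def by blast
        have zne: "zs \<noteq> []" using zs(1) by (simp add: is_walk_def)
        have "is_walk E' (zs @ [w])" using walk_snoc zs adjpw by metis
        then show ?thesis using zs zne True by (intro exI[of _ "zs @ [w]"]) auto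
      next
        case False
        then have "v \<in> S" using v by simp
        then obtain zs where "is_walk E' zs" "set zs \<subseteq> S" "hd zs = u" "last zs = v"
          using cS uS unfolding connected_graph_def by blast
        then show ?thesis by blast
      qed
    qed
  qed
  show ?thesis using wV i(2) prev wp uniq conn unfolding w_def[symmetric] p_def[symmetric] by blast
qed

lemma grow_induct:
  assumes sg: "simple_graph V' E'" and cV: "connected_graph V' E'" and nc: "\<not> has_cycle E'"
    and S0: "S0 \<subseteq> V'" "S0 \<noteq> {}" "connected_graph S0 E'" "P S0"
    and step: "\<And>S w p. S0 \<subseteq> S \<Longrightarrow> S \<subseteq> V' \<Longrightarrow> connected_graph S E' \<Longrightarrow> P S \<Longrightarrow> w \<in> V' \<Longrightarrow> w \<notin> S
       \<Longrightarrow> p \<in> S \<Longrightarrow> {w,p} \<in> E' \<Longrightarrow> (\<forall>q\<in>S. {w,q} \<in> E' \<longrightarrow> q = p) \<Longrightarrow> P (insert w S)"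
  shows "P V'"
proof -
  have fin: "finite V'" using sg by (simp add: simple_graph_def)
  have "\<forall>S. card (V' - S) = t \<longrightarrow> S0 \<subseteq> S \<longrightarrow> S \<subseteq> V' \<longrightarrow> connected_graph S E' \<longrightarrow> P S \<longrightarrow> P V'" for t
  proof (induction t)
    case 0
    then show ?case using fin by auto
  next
    case (Suc t)
    show ?case
    proof (intro allI impI)
      fix S assume c: "card (V' - S) = Suc t" and h: "S0 \<subseteq> S" "S \<subseteq> V'" "connected_graph S E'" "P S"
      have "S \<noteq> V'" using c by auto
      then obtain w p where wp: "w \<in> V'" "w \<notin> S" "p \<in> S" "{w,p} \<in> E'" "\<forall>q\<in>S. {w,q} \<in> E' \<longrightarrow> q = p"
        "connected_graph (insert w S) E'"
        using grow_step[OF sg cV nc h(2) _ h(3)] h(1) S0(2) by blast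
      have "P (insert w S)" using step[OF h(1) h(2) h(3) h(4) wp(1-5)] .
      moreover have "card (V' - insert w S) = t"
        using c wp(1,2) fin by (metis Diff_insert card_Diff_singleton diff_Suc_1 DiffI finite_Diff)
      ultimately show "P V'" using Suc.IH wp h by blast
    qed
  qed
  then show ?thesis using S0 by blast
qed




lemma sum_vcount: "finite S \<Longrightarrow> (\<Sum>a\<in>(UNIV::'a::finite set). vcount S l a) = card S"
proof -
  assume fS: "finite S"
  have "card (\<Union>a\<in>(UNIV::'a set). {v\<in>S. l v = a}) = (\<Sum>a\<in>UNIV. card {v\<in>S. l v = a})"
    by (rule card_UN_disjoint) (auto simp: fS)
  moreover have "(\<Union>a\<in>(UNIV::'a set). {v\<in>S. l v = a}) = S" by auto
  ultimately show ?thesis by (simp add: vcount_def)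
qed

lemma pair_sum: "u \<noteq> v \<Longrightarrow> (\<exists>u' v'. {u,v} = {u',v'} \<and> u' \<noteq> v' \<and> g u' + g v' = (a::'a::ab_semigroup_add))
   \<longleftrightarrow> g u + g v = a"
  by (auto simp: doubleton_eq_iff add.commute)

lemma sum_ecount:
  assumes fE: "finite F" and two: "\<forall>e\<in>F. \<exists>u v. e = {u,v} \<and> u \<noteq> v"
  shows "(\<Sum>a\<in>(UNIV::'a::{finite,ab_semigroup_add} set). ecount F l a) = card F"
proof -
  let ?R = "\<lambda>a. {e\<in>F. \<exists>u v. e = {u, v} \<and> u \<noteq> v \<and> l u + l v = a}"
  have "card (\<Union>a\<in>(UNIV::'a set). ?R a) = (\<Sum>a\<in>UNIV. card (?R a))"
  proof (rule card_UN_disjoint)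
    show "\<forall>i\<in>UNIV. \<forall>j\<in>UNIV. i \<noteq> j \<longrightarrow> ?R i \<inter> ?R j = {}"
    proof (intro ballI impI)
      fix i j :: 'a assume ij: "i \<noteq> j"
      show "?R i \<inter> ?R j = {}"
      proof (rule ccontr)
        assume "?R i \<inter> ?R j \<noteq> {}"
        then obtain e where e: "e \<in> ?R i" "e \<in> ?R j" by blast
        then obtain u v where uv: "e = {u,v}" "u \<noteq> v" "l u + l v = i" by blast
        then have "l u + l v = j" using e(2) pair_sum[of u v l j] by auto
        then show False using uv ij by simp
      qed
    qed
  qed (auto simp: fE)
  moreover have "(\<Union>a\<in>(UNIV::'a set). ?R a) = F"
  proof
    show "F \<subseteq> (\<Union>a\<in>(UNIV::'a set). ?R a)"
    proof
      fix e assume e: "e \<in> F"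
      then obtain u v where "e = {u,v}" "u \<noteq> v" using two by blast
      then have "e \<in> ?R (l u + l v)" using e by blast
      then show "e \<in> (\<Union>a\<in>(UNIV::'a set). ?R a)" by blast
    qed
  qed blast
  ultimately show ?thesis by (simp add: ecount_def)
qed

lemma balanced:
  fixes f :: "'a::finite \<Rightarrow> nat"
  assumes w: "\<And>a b. f a \<le> f b + 1" and s: "sum f UNIV = card (UNIV::'a set) * k + r" and r: "r < card (UNIV::'a set)"
  shows "(\<forall>a. k \<le> f a \<and> f a \<le> k+1) \<and> card {a. f a = k+1} = r"
proof -
  define m where "m = Min (range f)"
  obtain a0 where a0: "f a0 = m" proof -
    have "m \<in> range f" unfolding m_def by (rule Min_in) auto
    then show ?thesis using that by blast
  qed
  have mle: "\<And>a. m \<le> f a" unfolding m_def by simp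
  have rng: "\<And>a. f a = m \<or> f a = m + 1" using mle w[of _ a0] a0 by (metis le_Suc_eq le_antisym Suc_eq_plus1)
  define t where "t = card {a. f a = m+1}"
  have "sum f UNIV = (\<Sum>a\<in>UNIV. m + (if f a = m+1 then 1 else 0))"
    by (rule sum.cong) (use rng in auto)
  also have "\<dots> = card (UNIV::'a set) * m + t"
    unfolding t_def by (simp add: sum.distrib sum.If_cases)
  finally have st: "sum f UNIV = card (UNIV::'a set) * m + t" .
  have "a0 \<notin> {a. f a = m+1}" using a0 by simp
  then have "{a. f a = m+1} \<subset> UNIV" by blast
  then have tl: "t < card (UNIV::'a set)" unfolding t_def by (simp add: psubset_card_mono)
  have eq: "card (UNIV::'a set) * m + t = card (UNIV::'a set) * k + r" using st s by simp
  have "(card (UNIV::'a set) * m + t) div card (UNIV::'a set) = m" using tl by simp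
  moreover have "(card (UNIV::'a set) * k + r) div card (UNIV::'a set) = k" using r by simp
  ultimately have mk: "m = k" using eq by simp
  then have "t = r" using eq by simp
  then show ?thesis using mk rng t_def by (metis le_add1 order_refl)
qed




lemma vcount_insert:
  assumes "w \<notin> S" "finite S"
  shows "vcount (insert w S) (l(w:=x)) a = vcount S l a + (if x = a then 1 else 0)"
proof -
  have e: "{v \<in> S. (l(w:=x)) v = a} = {v\<in>S. l v = a}" using assms(1) by auto
  show ?thesis
  proof (cases "x = a")
    case True
    then have "{v \<in> insert w S. (l(w:=x)) v = a} = insert w {v\<in>S. l v = a}" using e by auto
    then show ?thesis using True assms by (simp add: vcount_def)
  next
    case False
    then have "{v \<in> insert w S. (l(w:=x)) v = a} = {v\<in>S. l v = a}" using e assms(1) by auto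
    then show ?thesis using False assms by (simp add: vcount_def)
  qed
qed

lemma filter_insert: "{e \<in> insert f F. P e} = (if P f then insert f {e\<in>F. P e} else {e\<in>F. P e})"
  by auto

lemma ecount_insert:
  fixes l :: "'v \<Rightarrow> 'a::ab_semigroup_add"
  assumes fF: "finite F" and nw: "\<forall>e\<in>F. w \<notin> e" and nF: "{w,p} \<notin> F" and wp: "w \<noteq> p"
  shows "ecount (insert {w,p} F) (l(w:=x)) a = ecount F l a + (if x + l p = a then 1 else 0)"
proof -
  let ?R = "\<lambda>g. {e\<in>F. \<exists>u v. e = {u, v} \<and> u \<noteq> v \<and> g u + g v = a}"
  have e: "?R (l(w:=x)) = ?R l"
  proof -
    have "\<And>u v. {u,v} \<in> F \<Longrightarrow> (l(w:=x)) u + (l(w:=x)) v = l u + l v"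
    proof -
      fix u v assume "{u,v} \<in> F"
      then have "u \<in> {u,v}" "v \<in> {u,v}" "w \<notin> {u,v}" using nw by auto
      then have "u \<noteq> w" "v \<noteq> w" by metis+
      then show "(l(w:=x)) u + (l(w:=x)) v = l u + l v" by simp
    qed
    note eqs = this
    show ?thesis
    proof (intro Collect_cong iffI)
      fix e assume h: "e \<in> F \<and> (\<exists>u v. e = {u, v} \<and> u \<noteq> v \<and> (l(w:=x)) u + (l(w:=x)) v = a)"
      then obtain u v where uv: "e = {u, v}" "u \<noteq> v" "(l(w:=x)) u + (l(w:=x)) v = a" by blast
      have "l u + l v = a" using eqs[of u v] uv h by simp
      then show "e \<in> F \<and> (\<exists>u v. e = {u, v} \<and> u \<noteq> v \<and> l u + l v = a)" using uv h by blast
    next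
      fix e assume h: "e \<in> F \<and> (\<exists>u v. e = {u, v} \<and> u \<noteq> v \<and> l u + l v = a)"
      then obtain u v where uv: "e = {u, v}" "u \<noteq> v" "l u + l v = a" by blast
      have "(l(w:=x)) u + (l(w:=x)) v = a" using eqs[of u v] uv h by simp
      then show "e \<in> F \<and> (\<exists>u v. e = {u, v} \<and> u \<noteq> v \<and> (l(w:=x)) u + (l(w:=x)) v = a)" using uv h by blast
    qed
  qed
  have pw: "(\<exists>u v. {w,p} = {u, v} \<and> u \<noteq> v \<and> (l(w:=x)) u + (l(w:=x)) v = a) \<longleftrightarrow> x + l p = a"
    using pair_sum[OF wp, of "l(w:=x)" a] wp by simp
  have fR: "finite (?R l)" using fF by simp
  show ?thesis
  proof (cases "x + l p = a")
    case True
    then have "{e\<in>insert {w,p} F. \<exists>u v. e = {u, v} \<and> u \<noteq> v \<and> (l(w:=x)) u + (l(w:=x)) v = a}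
       = insert {w,p} (?R l)" unfolding filter_insert by (simp only: e pw True if_True)
    then show ?thesis using True fR nF by (simp add: ecount_def)
  next
    case False
    note nf = this
    then have "{e\<in>insert {w,p} F. \<exists>u v. e = {u, v} \<and> u \<noteq> v \<and> (l(w:=x)) u + (l(w:=x)) v = a}
       = ?R l" unfolding filter_insert by (simp only: e pw nf if_False)
    then show ?thesis using False by (simp add: ecount_def)
  qed
qed

lemma simple_edge: "simple_graph V E \<Longrightarrow> e \<in> E \<Longrightarrow> \<exists>u v. e = {u,v} \<and> u \<noteq> v \<and> u \<in> V \<and> v \<in> V"
  unfolding simple_graph_def by (elim conjE bspec)

lemma ES_insert:
  assumes sg: "simple_graph V' E'" and w: "w \<notin> S" and p: "p \<in> S" and wpE: "{w,p} \<in> E'"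
    and uq: "\<forall>q\<in>S. {w,q} \<in> E' \<longrightarrow> q = p"
  shows "{e\<in>E'. e \<subseteq> insert w S} = insert {w,p} {e\<in>E'. e \<subseteq> S}" and "{w,p} \<notin> {e\<in>E'. e \<subseteq> S}"
proof -
  show "{w,p} \<notin> {e\<in>E'. e \<subseteq> S}" using w by auto
  show "{e\<in>E'. e \<subseteq> insert w S} = insert {w,p} {e\<in>E'. e \<subseteq> S}"
  proof (intro equalityI subsetI)
    fix e assume e: "e \<in> {e\<in>E'. e \<subseteq> insert w S}"
    then have "e \<in> E'" by simp
    then obtain u v where uv: "e = {u,v}" "u \<noteq> v" using simple_edge[OF sg] by metis
    show "e \<in> insert {w,p} {e\<in>E'. e \<subseteq> S}"
    proof (cases "w \<in> e")
      case False then show ?thesis using e by auto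
    next
      case True
      then obtain q where q: "e = {w,q}" "q \<noteq> w" using uv by auto
      have "q \<in> e" "e \<subseteq> insert w S" using q e by auto
      then have "q \<in> S" using q(2) by blast
      then have "q = p" using uq q(1) e by blast
      then show ?thesis using q by simp
    qed
  next
    fix e assume "e \<in> insert {w,p} {e\<in>E'. e \<subseteq> S}"
    then show "e \<in> {e\<in>E'. e \<subseteq> insert w S}" using wpE p by auto
  qed
qed

lemma simple_finE: "simple_graph V E \<Longrightarrow> finite E"
proof -
  assume sg: "simple_graph V E"
  have "E \<subseteq> Pow V"
  proof
    fix e assume "e \<in> E"
    then obtain u v where "e = {u,v}" "u \<in> V" "v \<in> V" using sg unfolding simple_graph_def by blast
    then show "e \<in> Pow V" by simp
  qed
  moreover have "finite V" using sg unfolding simple_graph_def by blast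
  ultimately show "finite E" by (meson finite_Pow_iff finite_subset)
qed

lemma tree_edges:
  assumes "is_tree V E" shows "card E + 1 = card V"
proof -
  have sg: "simple_graph V E" and ne: "V \<noteq> {}" and cV: "connected_graph V E" and nc: "\<not> has_cycle E"
    using assms unfolding is_tree_def by auto
  obtain v0 where v0: "v0 \<in> V" using ne by blast
  have fE: "finite E" using simple_finE[OF sg] .
  let ?P = "\<lambda>S. card {e\<in>E. e \<subseteq> S} + 1 = card S"
  have "?P V"
  proof (rule grow_induct[OF sg cV nc, of "{v0}"])
    show "connected_graph {v0} E" unfolding connected_graph_def by (auto intro: exI[of _ "[v0]"])
    have "{e\<in>E. e \<subseteq> {v0}} = {}"
    proof -
      have "\<And>e. e \<in> E \<Longrightarrow> \<not> e \<subseteq> {v0}" using sg unfolding simple_graph_def by fastforce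
      then show ?thesis by blast
    qed
    then show "?P {v0}" by simp
  next
    fix S w p assume h: "{v0} \<subseteq> S" "S \<subseteq> V" "connected_graph S E" "?P S" "w \<in> V" "w \<notin> S" "p \<in> S"
      "{w,p} \<in> E" "\<forall>q\<in>S. {w,q} \<in> E \<longrightarrow> q = p"
    have fS: "finite S" using h(2) sg unfolding simple_graph_def by (meson finite_subset)
    show "?P (insert w S)" using ES_insert[OF sg h(6,7,8,9)] h(4,6) fS fE by simp
  qed (use v0 in auto)
  moreover have "{e\<in>E. e \<subseteq> V} = E" using sg unfolding simple_graph_def by auto
  ultimately show ?thesis by simp
qed




lemma within1: "k \<le> (a::nat) \<Longrightarrow> a \<le> k+1 \<Longrightarrow> k \<le> b \<Longrightarrow> b \<le> k+1 \<Longrightarrow> \<bar>int a - int b\<bar> \<le> 1"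
  by arith

theorem lemma4p1:
  fixes V :: "'v set" and E :: "'v set set" and V' :: "'v set" and E' :: "'v set set" and k :: nat
  assumes "is_tree V E"
    and "cordial TYPE('a::{ab_group_add,finite}) V E"
    and "card V = card (UNIV :: 'a set) * k"
    and "is_tree V' E'"
    and "induced_subgraph V E V' E'"
    and "card V' \<le> card (UNIV :: 'a set) * k + card (UNIV :: 'a set) div 2 + 1"
  shows "cordial TYPE('a) V' E'"
proof -
  define N where "N = card (UNIV :: 'a set)"
  have N1: "N \<ge> 1" unfolding N_def by (simp add: Suc_le_eq card_gt_0_iff)
  have sg: "simple_graph V E" and Vne: "V \<noteq> {}" and cV: "connected_graph V E"
    using assms(1) unfolding is_tree_def by auto
  have sg': "simple_graph V' E'" and cV': "connected_graph V' E'" and nc': "\<not> has_cycle E'"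
    using assms(4) unfolding is_tree_def by auto
  have fV: "finite V" using sg unfolding simple_graph_def by simp
  have fV': "finite V'" using sg' unfolding simple_graph_def by simp
  have fE': "finite E'" using simple_finE[OF sg'] .
  have VV': "V \<subseteq> V'" and EE: "E = {e\<in>E'. e \<subseteq> V}" using assms(5) unfolding induced_subgraph_def by auto
  obtain l0 :: "'v \<Rightarrow> 'a" where l0: "cordial_labeling V E l0" using assms(2) unfolding cordial_def by blast
  have cV0: "card V = N * k" using assms(3) unfolding N_def .
  have "card V > 0" using fV Vne by (simp add: card_gt_0_iff)
  then have k1: "k \<ge> 1" using cV0 by (cases k) auto
  have cE: "card E + 1 = card V" using tree_edges[OF assms(1)] .
  have fE: "finite E" using simple_finE[OF sg] .
  have two: "\<And>F e. F \<subseteq> E' \<Longrightarrow> e \<in> F \<Longrightarrow> \<exists>u v. e = {u,v} \<and> u \<noteq> v"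
  proof -
    fix F e assume "F \<subseteq> E'" "e \<in> F"
    then have "e \<in> E'" by blast
    then show "\<exists>u v. e = {u,v} \<and> u \<noteq> v" using simple_edge[OF sg'] by metis
  qed
  have bv0: "(\<forall>a. k \<le> vcount V l0 a \<and> vcount V l0 a \<le> k+1) \<and> card {a. vcount V l0 a = k+1} = 0"
  proof (rule balanced)
    fix a b :: 'a show "vcount V l0 a \<le> vcount V l0 b + 1" using l0 unfolding cordial_labeling_def
      by (metis abs_le_iff diff_le_eq of_nat_le_iff of_nat_Suc add.commute Suc_eq_plus1)
  next
    show "sum (vcount V l0) UNIV = card (UNIV::'a set) * k + 0" using sum_vcount[OF fV] cV0 N_def by simp
  qed (use N1 N_def in simp)
  have vk: "\<And>a. vcount V l0 a = k"
  proof -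
    fix a
    have "{a. vcount V l0 a = k+1} = {}" using bv0 by simp
    then show "vcount V l0 a = k" using bv0 by (metis (mono_tags) empty_Collect_eq le_Suc_eq Suc_eq_plus1 le_antisym)
  qed
  have sE: "sum (ecount E l0) UNIV = card E"
    using sum_ecount[OF fE, of l0] two[of E] EE by blast
  have be0: "(\<forall>a. k - 1 \<le> ecount E l0 a \<and> ecount E l0 a \<le> k - 1 + 1) \<and> card {a. ecount E l0 a = k - 1 + 1} = N - 1"
  proof (rule balanced)
    fix a b :: 'a show "ecount E l0 a \<le> ecount E l0 b + 1" using l0 unfolding cordial_labeling_def
      by (metis abs_le_iff diff_le_eq of_nat_le_iff of_nat_Suc add.commute Suc_eq_plus1)
  next
    have "N * k = N * (k - 1) + N" using k1 by (cases k) auto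
    then show "sum (ecount E l0) UNIV = card (UNIV::'a set) * (k - 1) + (N - 1)"
      using sE cE cV0 N_def N1 by simp
  qed (use N1 N_def in simp)
  have kk: "k - 1 + 1 = k" using k1 by simp
  have "{a. ecount E l0 a = k} \<noteq> UNIV"
  proof
    assume "{a. ecount E l0 a = k} = UNIV"
    then have "card {a. ecount E l0 a = k} = N" unfolding N_def by simp
    moreover have "card {a. ecount E l0 a = k} = N - 1" using be0 kk by simp
    ultimately show False using N1 by linarith
  qed
  then obtain c where c: "ecount E l0 c \<noteq> k" by blast
  then have ck: "ecount E l0 c = k - 1" using be0 kk by (metis le_antisym le_Suc_eq Suc_eq_plus1)
  have ok: "\<And>a. a \<noteq> c \<Longrightarrow> ecount E l0 a = k"
  proof -
    fix a assume ac: "a \<noteq> c"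
    have sub: "{a. ecount E l0 a = k} \<subseteq> UNIV - {c}" using c by blast
    have "card (UNIV - {c}) = N - 1" unfolding N_def by (simp add: card_Diff_singleton)
    then have "{a. ecount E l0 a = k} = UNIV - {c}"
      using card_subset_eq[OF _ sub] be0 kk by simp
    then show "ecount E l0 a = k" using ac by blast
  qed
  show ?thesis
  proof (cases "V' = V")
    case True
    have "E' \<subseteq> {e. e \<subseteq> V'}"
    proof
      fix e assume "e \<in> E'"
      then obtain u v where "e = {u,v}" "u \<in> V'" "v \<in> V'" using simple_edge[OF sg'] by metis
      then show "e \<in> {e. e \<subseteq> V'}" by simp
    qed
    then have "E = E'" using EE True by blast
    then show ?thesis using assms(2) True by simp
  next
    case False
    define ES where "ES S = {e\<in>E'. e \<subseteq> S}" for S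
    define good where "good S l \<longleftrightarrow> (\<forall>a. k \<le> vcount S l a \<and> vcount S l a \<le> k+1) \<and>
        (\<forall>a. k \<le> ecount (ES S) l a \<and> ecount (ES S) l a \<le> k+1)" for S and l :: "'v \<Rightarrow> 'a"
    have ESV: "ES V = E" unfolding ES_def using EE by simp
    have main: "card (ES V') + 1 = card V' \<and> (V' = V \<or> (\<exists>l. good V' l))"
    proof (rule grow_induct[OF sg' cV' nc', of V])
      show "connected_graph V E'" using cV walk_mono EE unfolding connected_graph_def
        by (metis (no_types, lifting) mem_Collect_eq subsetI)
      show "card (ES V) + 1 = card V \<and> (V = V \<or> (\<exists>l. good V l))" using ESV cE by simp
    next
      fix S w p assume h: "V \<subseteq> S" "S \<subseteq> V'" "connected_graph S E'"
        "card (ES S) + 1 = card S \<and> (S = V \<or> (\<exists>l. good S l))" "w \<in> V'" "w \<notin> S" "p \<in> S"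
        "{w,p} \<in> E'" "\<forall>q\<in>S. {w,q} \<in> E' \<longrightarrow> q = p"
      have fS: "finite S" using h(2) fV' by (meson finite_subset)
      have ESi: "ES (insert w S) = insert {w,p} (ES S)" "{w,p} \<notin> ES S"
        using ES_insert[OF sg' h(6,7,8,9)] unfolding ES_def by auto
      have fES: "finite (ES S)" using fE' unfolding ES_def by simp
      have nw: "\<forall>e\<in>ES S. w \<notin> e" using h(6) unfolding ES_def by auto
      have wp: "w \<noteq> p" using h(6,7) by auto
      have card1: "card (ES (insert w S)) + 1 = card (insert w S)" using ESi fES fS h(4,6) by simp
      have "\<exists>l. good (insert w S) l"
      proof (cases "S = V")
        case True
        define l' where "l' = l0(w := c - l0 p)"
        have "good (insert w S) l'" unfolding good_def
        proof (intro conjI allI)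
          fix a
          have "vcount (insert w S) l' a = vcount V l0 a + (if c - l0 p = a then 1 else 0)"
            unfolding l'_def using vcount_insert[of w S l0 "c - l0 p" a] h(6) fS True by simp
          then show "k \<le> vcount (insert w S) l' a" "vcount (insert w S) l' a \<le> k+1" using vk[of a] by auto
          have "ecount (ES (insert w S)) l' a = ecount E l0 a + (if c - l0 p + l0 p = a then 1 else 0)"
            unfolding l'_def ESi(1) using ecount_insert[OF fES nw ESi(2) wp, of l0 "c - l0 p" a] True ESV by simp
          then have "ecount (ES (insert w S)) l' a = ecount E l0 a + (if c = a then 1 else 0)" by simp
          then show "k \<le> ecount (ES (insert w S)) l' a" "ecount (ES (insert w S)) l' a \<le> k+1"
            using ck ok[of a] kk by (cases "c = a"; simp)+
        qed
        then show ?thesis by blast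
      next
        case False
        then obtain l where gl: "good S l" using h(4) by blast
        have "V \<subset> S" using h(1) False by blast
        then have cVS: "card V < card S" using fS by (simp add: psubset_card_mono)
        have "card (insert w S) \<le> card V'" using h(2,5) fV' by (simp add: card_mono)
        then have cS': "card S + 1 \<le> card V'" using h(6) fS by simp
        define j where "j = card S - N * k"
        have cSj: "card S = N * k + j" using cVS cV0 unfolding j_def by simp
        have j1: "j \<ge> 1" using cVS cV0 cSj by simp
        have j2: "j \<le> N div 2" using cS' cSj assms(6) N_def by simp
        have jN: "j < N" using j2 N1 by linarith
        have bv: "(\<forall>a. k \<le> vcount S l a \<and> vcount S l a \<le> k+1) \<and> card {a. vcount S l a = k+1} = j"
        proof (rule balanced)
          fix a b :: 'a show "vcount S l a \<le> vcount S l b + 1" using gl unfolding good_def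
            by (meson add_le_mono1 le_trans)
        next
          show "sum (vcount S l) UNIV = card (UNIV::'a set) * k + j" using sum_vcount[OF fS] cSj N_def by simp
        qed (use jN N_def in simp)
        have sES: "sum (ecount (ES S) l) UNIV = card (ES S)"
          using sum_ecount[OF fES, of l] two[of "ES S"] unfolding ES_def by blast
        have be: "(\<forall>a. k \<le> ecount (ES S) l a \<and> ecount (ES S) l a \<le> k+1) \<and> card {a. ecount (ES S) l a = k+1} = j - 1"
        proof (rule balanced)
          fix a b :: 'a show "ecount (ES S) l a \<le> ecount (ES S) l b + 1" using gl unfolding good_def
            by (meson add_le_mono1 le_trans)
        next
          show "sum (ecount (ES S) l) UNIV = card (UNIV::'a set) * k + (j - 1)" using sES h(4) cSj j1 N_def by (simp, linarith)
        qed (use jN N_def in simp)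
        define F1 where "F1 = {a. vcount S l a = k+1}"
        define F2 where "F2 = {a. ecount (ES S) l a = k+1}"
        define Bad where "Bad = F1 \<union> (\<lambda>b. b - l p) ` F2"
        have "card Bad \<le> card F1 + card ((\<lambda>b. b - l p) ` F2)" unfolding Bad_def by (rule card_Un_le)
        also have "\<dots> \<le> card F1 + card F2" by (simp add: card_image_le)
        also have "\<dots> = j + (j - 1)" using bv be unfolding F1_def F2_def by simp
        also have "\<dots> < N" using j1 j2 by linarith
        finally have "card Bad < card (UNIV :: 'a set)" unfolding N_def .
        then have "Bad \<noteq> UNIV" by auto
        then obtain x where x: "x \<notin> Bad" by blast
        have x1: "vcount S l x = k" using x bv unfolding Bad_def F1_def by (metis (mono_tags) UnCI mem_Collect_eq le_antisym le_Suc_eq Suc_eq_plus1)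
        have "x + l p \<notin> F2"
        proof
          assume "x + l p \<in> F2"
          then have "(x + l p) - l p \<in> (\<lambda>b. b - l p) ` F2" by blast
          then show False using x unfolding Bad_def by simp
        qed
        then have x2: "ecount (ES S) l (x + l p) = k" using be unfolding F2_def by (metis (mono_tags) mem_Collect_eq le_antisym le_Suc_eq Suc_eq_plus1)
        define l' where "l' = l(w := x)"
        have "good (insert w S) l'" unfolding good_def
        proof (intro conjI allI)
          fix a
          have "vcount (insert w S) l' a = vcount S l a + (if x = a then 1 else 0)"
            unfolding l'_def using vcount_insert[of w S l x a] h(6) fS by simp
          then show "k \<le> vcount (insert w S) l' a" "vcount (insert w S) l' a \<le> k+1"
            using bv x1 by (cases "x = a"; simp)+
          have "ecount (ES (insert w S)) l' a = ecount (ES S) l a + (if x + l p = a then 1 else 0)"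
            unfolding l'_def ESi(1) using ecount_insert[OF fES nw ESi(2) wp, of l x a] by simp
          then show "k \<le> ecount (ES (insert w S)) l' a" "ecount (ES (insert w S)) l' a \<le> k+1"
            using be x2 by (cases "x + l p = a"; simp)+
        qed
        then show ?thesis by blast
      qed
      then show "card (ES (insert w S)) + 1 = card (insert w S) \<and> (insert w S = V \<or> (\<exists>l. good (insert w S) l))"
        using card1 by blast
    qed (use VV' Vne in auto)
    then obtain l where gl: "good V' l" using False by blast
    have "E' \<subseteq> {e. e \<subseteq> V'}"
    proof
      fix e assume "e \<in> E'"
      then obtain u v where "e = {u,v}" "u \<in> V'" "v \<in> V'" using simple_edge[OF sg'] by metis
      then show "e \<in> {e. e \<subseteq> V'}" by simp
    qed
    then have "ES V' = E'" unfolding ES_def by blast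
    then have "cordial_labeling V' E' l" using gl unfolding good_def cordial_labeling_def
      using within1 by metis
    then show ?thesis unfolding cordial_def by blast
  qed
qed


end
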